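(* Let $H=(U,(A_1,\dots,A_m))$ be a complete harmonic set system with $|U|<m(m-2)$ and $m\ge 51$, such that $H_I=\emptyset$ for every nonconsecutive $I\subseteq[m]$ of size $3$. Then $|U|$ is a nonnegative integer linear combination of $m$, $m+1$, $\binom m2$ and $\frac{(m+1)(m-2)}{2}$.
   Context: For $I\subseteq[m]$, $H_I=\bigcap_{i\in I}A_i$ ($=U$ if $I=\emptyset$). $H$ is complete if $\bigcup_{i=1}^m A_i=U$. The run decomposition of a finite set $I$ of positive integers is the partition of sizes, in nonincreasing order, of the maximal runs of consecutive integers in $I$. $H$ is harmonic if $|H_I|=|H_J|$ whenever $I,J\subseteq[m]$ have the same run decomposition. A set of integers is nonconsecutive if no two distinct elements differ by exactly $1$. *)

theory Defs
  imports Main "HOL-Library.Multiset"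
begin

definition HI :: "'a set \<Rightarrow> (nat \<Rightarrow> 'a set) \<Rightarrow> nat set \<Rightarrow> 'a set" where
  "HI U A I = (if I = {} then U else (\<Inter>i\<in>I. A i))"

definition is_set_system :: "'a set \<Rightarrow> (nat \<Rightarrow> 'a set) \<Rightarrow> nat \<Rightarrow> bool" where
  "is_set_system U A m \<longleftrightarrow> finite U \<and> (\<forall>i\<in>{1..m}. A i \<subseteq> U)"

definition complete_system :: "'a set \<Rightarrow> (nat \<Rightarrow> 'a set) \<Rightarrow> nat \<Rightarrow> bool" where
  "complete_system U A m \<longleftrightarrow> (\<Union>i\<in>{1..m}. A i) = U"

definition runs :: "nat set \<Rightarrow> nat set set" where
  "runs I = {{a..b} | a b. a \<le> b \<and> {a..b} \<subseteq> I \<and> Suc b \<notin> I \<and> (\<forall>c. Suc c = a \<longrightarrow> c \<notin> I)}"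

definition run_decomp :: "nat set \<Rightarrow> nat multiset" where
  "run_decomp I = image_mset card (mset_set (runs I))"

definition harmonic :: "'a set \<Rightarrow> (nat \<Rightarrow> 'a set) \<Rightarrow> nat \<Rightarrow> bool" where
  "harmonic U A m \<longleftrightarrow> (\<forall>I J. I \<subseteq> {1..m} \<longrightarrow> J \<subseteq> {1..m} \<longrightarrow>
      run_decomp I = run_decomp J \<longrightarrow> card (HI U A I) = card (HI U A J))"

definition nonconsecutive :: "nat set \<Rightarrow> bool" where
  "nonconsecutive I \<longleftrightarrow> (\<forall>x\<in>I. \<forall>y\<in>I. y \<noteq> Suc x)"

end

theory Submission
  imports Defs
begin

definition flt :: "('a \<Rightarrow> bool) \<Rightarrow> 'a set \<Rightarrow> 'a set" where "flt P X = {x\<in>X. P x}"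
lemma flt_insert[simp]: "flt P (insert x X) = (if P x then insert x (flt P X) else flt P X)"
  by (auto simp: flt_def)
lemma flt_empty[simp]: "flt P {} = {}" by (auto simp: flt_def)
lemma flt_finite[simp]: "finite X \<Longrightarrow> finite (flt P X)" by (simp add: flt_def)
lemma mem_flt[simp]: "x \<in> flt P X \<longleftrightarrow> x \<in> X \<and> P x" by (simp add: flt_def)

definition cnt2 :: "nat set \<Rightarrow> nat" where "cnt2 S = card (flt (\<lambda>i. i+1 \<in> S) S)"
definition cnt3 :: "nat set \<Rightarrow> nat" where "cnt3 S = card (flt (\<lambda>i. i+1 \<in> S \<and> i+2\<in>S) S)"
definition cnt4 :: "nat set \<Rightarrow> nat" where "cnt4 S = card (flt (\<lambda>i. i+1 \<in> S \<and> i+2\<in>S \<and> i+3 \<in> S) S)"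
definition p11 :: "nat set \<Rightarrow> nat" where "p11 S = (\<Sum>i\<in>S. card (flt (\<lambda>j. i+2 \<le> j) S))"
definition p12 :: "nat set \<Rightarrow> nat" where "p12 S = (\<Sum>i\<in>S. card (flt (\<lambda>j. i+2 \<le> j \<and> j+1\<in>S) S) + card (flt (\<lambda>j. i+3 \<le> j \<and> i+1\<in>S) S))"
definition p22 :: "nat set \<Rightarrow> nat" where "p22 S = (\<Sum>i\<in>S. card (flt (\<lambda>j. i+3 \<le> j \<and> i+1\<in>S \<and> j+1\<in>S) S))"

definition F :: "nat set \<Rightarrow> int" where
 "F S = int (card S) - int (cnt2 S) + int (cnt3 S) - int (cnt4 S) - int (p11 S) + int (p12 S) - int (p22 S)"


definition io :: "nat set \<Rightarrow> nat set \<Rightarrow> int" where "io T S = (if T \<subseteq> S then 1 else 0)"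

definition R4 :: "nat set \<Rightarrow> int" where
 "R4 S = 1 - io {3} S - io {5} S + io {2,3} S + io {3,5} S + io {5,6} S
   - io {1,2,3} S - io {2,3,5} S - io {3,5,6} S - io {5,6,7} S
   - int (card (flt (\<lambda>j. j \<le> 2 \<or> 6 \<le> j) S))
   + int (card (flt (\<lambda>j. j+1 \<in> S \<and> (j+1 \<le> 2 \<or> 6 \<le> j)) S))
   + int (card (flt (\<lambda>j. 3 \<in> S \<and> (j \<le> 1 \<or> 6 \<le> j)) S))
   + int (card (flt (\<lambda>j. 5 \<in> S \<and> (j \<le> 2 \<or> 7 \<le> j)) S))
   - int (card (flt (\<lambda>j. 3 \<in> S \<and> j+1 \<in> S \<and> 6 \<le> j) S))
   - int (card (flt (\<lambda>j. 5 \<in> S \<and> j+1 \<in> S \<and> (j+1 \<le> 2 \<or> 7 \<le> j)) S))"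

definition R45 :: "nat set \<Rightarrow> int" where
 "R45 S = 1 - io {3} S - io {6} S + io {2,3} S + io {3,6} S + io {6,7} S
   - int (card (flt (\<lambda>j. j \<le> 2 \<or> 7 \<le> j) S))
   + int (card (flt (\<lambda>j. j+1 \<in> S \<and> (j+1 \<le> 2 \<or> 7 \<le> j)) S))"

definition R1 :: "nat set \<Rightarrow> int" where
 "R1 S = 1 - io {2} S + io {2,3} S - io {2,3,4} S
   - int (card (flt (\<lambda>j. 3 \<le> j) S))
   + int (card (flt (\<lambda>j. j+1 \<in> S \<and> 3 \<le> j) S))
   + int (card (flt (\<lambda>j. 2 \<in> S \<and> 4 \<le> j) S))
   - int (card (flt (\<lambda>j. 2 \<in> S \<and> j+1 \<in> S \<and> 4 \<le> j) S))"

lemmas cdefs = F_def cnt2_def cnt3_def cnt4_def p11_def p12_def p22_def card_insert_if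
lemmas rdefs = R4_def R45_def R1_def io_def card_insert_if

lemma seteq: "(\<And>x. x \<in> S \<Longrightarrow> x \<in> X) \<Longrightarrow> X \<subseteq> S \<Longrightarrow> S = X" by blast

definition shp :: "nat set \<Rightarrow> bool" where "shp S \<longleftrightarrow> (\<exists>a. S={a}) \<or> (\<exists>a. S={a,a+1}) \<or> (\<exists>a. S={a,a+1,a+2}) \<or> (\<exists>a. S={a,a+1,a+2,a+3})
    \<or> (\<exists>a b. a+2\<le>b \<and> S={a,b}) \<or> (\<exists>a b. a+2\<le>b \<and> S={a,b,b+1})
    \<or> (\<exists>a b. a+3\<le>b \<and> S={a,a+1,b}) \<or> (\<exists>a b. a+3\<le>b \<and> S={a,a+1,b,b+1})"

lemma shape:
  fixes S :: "nat set"
  assumes fin: "finite S" and ne: "S \<noteq> {}"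
    and tf: "\<And>i j k. i\<in>S \<Longrightarrow> j\<in>S \<Longrightarrow> k\<in>S \<Longrightarrow> i+2 \<le> j \<Longrightarrow> j+2 \<le> k \<Longrightarrow> False"
  shows "(\<exists>a. S={a}) \<or> (\<exists>a. S={a,a+1}) \<or> (\<exists>a. S={a,a+1,a+2}) \<or> (\<exists>a. S={a,a+1,a+2,a+3})
    \<or> (\<exists>a b. a+2\<le>b \<and> S={a,b}) \<or> (\<exists>a b. a+2\<le>b \<and> S={a,b,b+1})
    \<or> (\<exists>a b. a+3\<le>b \<and> S={a,a+1,b}) \<or> (\<exists>a b. a+3\<le>b \<and> S={a,a+1,b,b+1})"
proof -
  define a where "a = Min S"
  define z where "z = Max S"
  have aS: "a \<in> S" using fin ne by (simp add: a_def)
  have zS: "z \<in> S" using fin ne by (simp add: z_def)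
  have le: "a \<le> y \<and> y \<le> z" if "y \<in> S" for y using fin that by (simp add: a_def z_def)
  have key: "y = a \<or> y = a+1 \<or> y = z \<or> y+1 = z" if y: "y \<in> S" for y
  proof (rule ccontr)
    assume "\<not> ?thesis"
    then have "a+2 \<le> y" "y+2 \<le> z" using le[OF y] by auto
    then show False using tf[OF aS y zS] by auto
  qed
  have key2: "(y = a \<or> y = a+1 \<or> y = z \<or> y+1 = z) \<and> a \<le> y \<and> y \<le> z" if "y \<in> S" for y
    using key[OF that] le[OF that] by blast
  have az: "a \<le> z" using le[OF aS] by simp
  consider "z = a" | "z = a+1" | "z = a+2" | "z = a+3" | "a+4 \<le> z" using az by linarith
  then show ?thesis
  proof cases
    case c: 1
    have "S = {a}"
    proof (rule seteq)
      fix x assume "x \<in> S" from key2[OF this] show "x \<in> {a}" using c by auto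
    qed (use aS in auto)
    then have "\<exists>a. S={a}" by blast
    then show ?thesis by - (rule disjI1, assumption)
  next
    case c: 2
    have "S = {a,a+1}"
    proof (rule seteq)
      fix x assume "x \<in> S" from key2[OF this] show "x \<in> {a,a+1}" using c by auto
    qed (use aS zS c in auto)
    then have "\<exists>a. S={a,a+1}" by blast
    then show ?thesis by - (rule disjI2, rule disjI1, assumption)
  next
    case c: 3
    show ?thesis
    proof (cases "a+1 \<in> S")
      case p: True
      have "S = {a,a+1,a+2}"
      proof (rule seteq)
        fix x assume "x \<in> S" from key2[OF this] show "x \<in> {a,a+1,a+2}" using c by auto
      qed (use aS zS c p in auto)
      then have "\<exists>a. S={a,a+1,a+2}" by blast
      then show ?thesis by - (rule disjI2, rule disjI2, rule disjI1, assumption)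
    next
      case p: False
      have "S = {a,a+2}"
      proof (rule seteq)
        fix x assume x: "x \<in> S" from key2[OF this] show "x \<in> {a,a+2}" using c p x by auto
      qed (use aS zS c in auto)
      then have "\<exists>a b. a+2\<le>b \<and> S={a,b}" by blast
      then show ?thesis by - (rule disjI2, rule disjI2, rule disjI2, rule disjI2, rule disjI1, assumption)
    qed
  next
    case c: 4
    show ?thesis
    proof (cases "a+1 \<in> S"; cases "a+2 \<in> S")
      assume p: "a+1 \<in> S" and q: "a+2 \<in> S"
      have "S = {a,a+1,a+2,a+3}"
      proof (rule seteq)
        fix x assume "x \<in> S" from key2[OF this] show "x \<in> {a,a+1,a+2,a+3}" using c by auto
      qed (use aS zS c p q in auto)
      then have "\<exists>a. S={a,a+1,a+2,a+3}" by blast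
      then show ?thesis by - (rule disjI2, rule disjI2, rule disjI2, rule disjI1, assumption)
    next
      assume p: "a+1 \<in> S" and q: "a+2 \<notin> S"
      have "S = {a,a+1,a+3}"
      proof (rule seteq)
        fix x assume x: "x \<in> S" from key2[OF this] show "x \<in> {a,a+1,a+3}" using c q x by auto
      qed (use aS zS c p in auto)
      then have "\<exists>a b. a+3\<le>b \<and> S={a,a+1,b}" by blast
      then show ?thesis by - (rule disjI2, rule disjI2, rule disjI2, rule disjI2, rule disjI2, rule disjI2, rule disjI1, assumption)
    next
      assume p: "a+1 \<notin> S" and q: "a+2 \<in> S"
      have "S = {a,a+2,a+2+1}"
      proof (rule seteq)
        fix x assume x: "x \<in> S" from key2[OF this] show "x \<in> {a,a+2,a+2+1}" using c p x by auto
      qed (use aS zS c q in \<open>auto simp: eval_nat_numeral\<close>)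
      then have "\<exists>a' b. a'+2\<le>b \<and> S={a',b,b+1}" by (intro exI[of _ a] exI[of _ "a+2"]) simp
      then show ?thesis by - (rule disjI2, rule disjI2, rule disjI2, rule disjI2, rule disjI2, rule disjI1, assumption)
    next
      assume p: "a+1 \<notin> S" and q: "a+2 \<notin> S"
      have "S = {a,a+3}"
      proof (rule seteq)
        fix x assume x: "x \<in> S" from key2[OF this] show "x \<in> {a,a+3}" using c p q x by auto
      qed (use aS zS c in auto)
      then have "\<exists>a' b. a'+2\<le>b \<and> S={a',b}" by (intro exI[of _ a] exI[of _ "a+3"]) simp
      then show ?thesis by - (rule disjI2, rule disjI2, rule disjI2, rule disjI2, rule disjI1, assumption)
    qed
  next
    case c: 5
    obtain w where w: "z = w+1" "a+3 \<le> w" using c by (intro that[of "z-1"]) auto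
    show ?thesis
    proof (cases "a+1 \<in> S"; cases "w \<in> S")
      assume p: "a+1 \<in> S" and q: "w \<in> S"
      have "S = {a,a+1,w,w+1}"
      proof (rule seteq)
        fix x assume "x \<in> S" from key2[OF this] show "x \<in> {a,a+1,w,w+1}" using w by auto
      qed (use aS zS w p q in auto)
      then have "\<exists>a' b. a'+3\<le>b \<and> S={a',a'+1,b,b+1}" using w by (intro exI[of _ a] exI[of _ "w"]) simp
      then show ?thesis by - (rule disjI2, rule disjI2, rule disjI2, rule disjI2, rule disjI2, rule disjI2, rule disjI2, assumption)
    next
      assume p: "a+1 \<in> S" and q: "w \<notin> S"
      have "S = {a,a+1,w+1}"
      proof (rule seteq)
        fix x assume x: "x \<in> S" from key2[OF this] show "x \<in> {a,a+1,w+1}" using w q x by auto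
      qed (use aS zS w p in auto)
      then have "\<exists>a' b. a'+3\<le>b \<and> S={a',a'+1,b}" using w by (intro exI[of _ a] exI[of _ "w+1"]) simp
      then show ?thesis by - (rule disjI2, rule disjI2, rule disjI2, rule disjI2, rule disjI2, rule disjI2, rule disjI1, assumption)
    next
      assume p: "a+1 \<notin> S" and q: "w \<in> S"
      have "S = {a,w,w+1}"
      proof (rule seteq)
        fix x assume x: "x \<in> S" from key2[OF this] show "x \<in> {a,w,w+1}" using w p x by auto
      qed (use aS zS w q in auto)
      then have "\<exists>a' b. a'+2\<le>b \<and> S={a',b,b+1}" using w by (intro exI[of _ a] exI[of _ "w"]) simp
      then show ?thesis by - (rule disjI2, rule disjI2, rule disjI2, rule disjI2, rule disjI2, rule disjI1, assumption)
    next
      assume p: "a+1 \<notin> S" and q: "w \<notin> S"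
      have "S = {a,w+1}"
      proof (rule seteq)
        fix x assume x: "x \<in> S" from key2[OF this] show "x \<in> {a,w+1}" using w p q x by auto
      qed (use aS zS w in auto)
      then have "\<exists>a' b. a'+2\<le>b \<and> S={a',b}" using w by (intro exI[of _ a] exI[of _ "w+1"]) simp
      then show ?thesis by - (rule disjI2, rule disjI2, rule disjI2, rule disjI2, rule disjI1, assumption)
    qed
  qed
qed

lemma shape':
  fixes S :: "nat set"
  assumes fin: "finite S" and ne: "S \<noteq> {}"
    and tf: "\<And>i j k. i\<in>S \<Longrightarrow> j\<in>S \<Longrightarrow> k\<in>S \<Longrightarrow> i+2 \<le> j \<Longrightarrow> j+2 \<le> k \<Longrightarrow> False"
  shows "shp S"
  unfolding shp_def by (rule shape[OF fin ne tf])

lemma F_one: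
  fixes S :: "nat set"
  assumes fin: "finite S" and ne: "S \<noteq> {}"
    and tf: "\<And>i j k. i\<in>S \<Longrightarrow> j\<in>S \<Longrightarrow> k\<in>S \<Longrightarrow> i+2 \<le> j \<Longrightarrow> j+2 \<le> k \<Longrightarrow> False"
  shows "F S = 1"
  proof -
  have "shp S" using fin ne tf by (rule shape')
  then show ?thesis unfolding shp_def by (elim disjE exE conjE; simp add: cdefs)
qed


lemma R4_sh: "shp S \<Longrightarrow> (4 \<in> S \<and> 0 \<notin> S \<longrightarrow> R4 S \<ge> 0)"
  unfolding shp_def by (elim disjE exE conjE; simp only: insert_iff singleton_iff empty_iff simp_thms; (intro impI)?; (elim conjE disjE)?; simp add: rdefs)
lemma R45_sh: "shp S \<Longrightarrow> (4 \<in> S \<and> 5 \<in> S \<and> 0 \<notin> S \<longrightarrow> R45 S \<ge> 0)"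
  unfolding shp_def by (elim disjE exE conjE; simp only: insert_iff singleton_iff empty_iff simp_thms; (intro impI)?; (elim conjE disjE)?; simp add: rdefs)
lemma R1_sh: "shp S \<Longrightarrow> (1 \<in> S \<and> 0 \<notin> S \<longrightarrow> R1 S \<ge> 0)"
  unfolding shp_def by (elim disjE exE conjE; simp only: insert_iff singleton_iff empty_iff simp_thms; (intro impI)?; (elim conjE disjE)?; simp add: rdefs)


lemma arith_final:
  fixes n M C1 C2 C3 C4 D11 D12 D22 :: int
  assumes M: "M \<ge> 51"
    and nF: "2*n = 2*M*C1 - 2*(M-1)*C2 + 2*(M-2)*C3 - 2*(M-3)*C4 - (M-2)*(M-1)*D11 + 2*(M-3)*(M-2)*D12 - (M-4)*(M-3)*D22"
    and P1: "C1 - 2*C2 + 3*C3 - 4*C4 - (M-3)*D11 + (3*M-13)*D12 - (2*M-12)*D22 \<ge> 0"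
    and P2: "C2 - 2*C3 + 3*C4 - (M-4)*D12 + (M-6)*D22 \<ge> 0"
    and g1: "C1 - C2 + C3 - C4 - (M-2)*D11 + (2*M-6)*D12 - (M-4)*D22 \<ge> 0"
    and Q11: "D11 - 4*D12 + 4*D22 \<ge> 0" and Q12: "D12 - 2*D22 \<ge> 0" and P22: "D22 \<ge> 0"
    and lt: "n < M*(M-2)"
  shows "\<exists>a b c d. a \<ge> 0 \<and> b \<ge> 0 \<and> c \<ge> 0 \<and> d \<ge> 0 \<and>
           2*n = 2*a*M + 2*b*(M+1) + c*(M*(M-1)) + d*((M+1)*(M-2))"
proof -
  define p1 where "p1 = C1 - 2*C2 + 3*C3 - 4*C4 - (M-3)*D11 + (3*M-13)*D12 - (2*M-12)*D22"
  define p2 where "p2 = C2 - 2*C3 + 3*C4 - (M-4)*D12 + (M-6)*D22"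
  define q11 where "q11 = D11 - 4*D12 + 4*D22"
  define q12 where "q12 = D12 - 2*D22"
  have id: "2*n = 2*M*p1 + 2*(M+1)*p2 + (M*M-3*M-2)*q11 + 2*((M+1)*(M-2))*q12 + M*(M+1)*D22"
    unfolding nF p1_def p2_def q11_def q12_def by (linarith | (simp add: algebra_simps; linarith) | (simp add: algebra_simps))
  have g1': "p1 + p2 - q11 - q12 \<ge> 0" using g1 unfolding p1_def p2_def q11_def q12_def by (linarith | (simp add: algebra_simps; linarith) | (simp add: algebra_simps))
  have p1: "p1 \<ge> 0" "p2 \<ge> 0" "q11 \<ge> 0" "q12 \<ge> 0" using P1 P2 Q11 Q12 by (simp_all add: p1_def p2_def q11_def q12_def)
  have MM: "M*M \<ge> 51*M" using M by (intro mult_right_mono) auto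
  have cpos: "M*M-3*M-2 \<ge> 0" using MM M by linarith
  have X1: "M*p1 \<ge> 0" "(M+1)*p2 \<ge> 0" "(M*M-3*M-2)*q11 \<ge> 0" "((M+1)*(M-2))*q12 \<ge> 0" "M*(M+1)*D22 \<ge> 0"
    using p1 P22 M cpos by (simp_all add: zero_le_mult_iff)
  have lt2: "2*n < 2*(M*M) - 4*M" using lt by (linarith | (simp add: algebra_simps; linarith) | (simp add: algebra_simps))
  have D22le: "D22 \<le> 1"
  proof (rule ccontr)
    assume "\<not> D22 \<le> 1"
    then have "M*(M+1)*D22 \<ge> M*(M+1)*2" using M MM cpos by (intro mult_left_mono) auto
    then show False using id X1 lt2 M by (linarith | (simp add: algebra_simps; linarith) | (simp add: algebra_simps))
  qed
  have q12z: "q12 = 0"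
  proof (rule ccontr)
    assume "q12 \<noteq> 0" then have "q12 \<ge> 1" using p1 by simp
    then have "((M+1)*(M-2))*q12 \<ge> ((M+1)*(M-2))*1" using M MM cpos by (intro mult_left_mono) auto
    then show False using id X1 lt2 M MM by (linarith | (simp add: algebra_simps; linarith) | (simp add: algebra_simps))
  qed
  show ?thesis
  proof (cases "D22 = 1")
    case True
    have q11z: "q11 = 0"
    proof (rule ccontr)
      assume "q11 \<noteq> 0" then have "q11 \<ge> 1" using p1 by simp
      then have "(M*M-3*M-2)*q11 \<ge> (M*M-3*M-2)*1" using M MM cpos by (intro mult_left_mono) auto
      then show False using id X1 lt2 M MM True by (linarith | (simp add: algebra_simps; linarith) | (simp add: algebra_simps))
    qed
    have "2*n = 2*(p1+1)*M + 2*p2*(M+1) + 1*(M*(M-1)) + 0*((M+1)*(M-2))"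
      using id True q11z q12z by (linarith | (simp add: algebra_simps; linarith) | (simp add: algebra_simps))
    then show ?thesis using p1 by (intro exI[of _ "p1+1"] exI[of _ p2] exI[of _ 1] exI[of _ 0]) simp
  next
    case False
    then have D0: "D22 = 0" using D22le P22 by simp
    have q11le: "q11 \<le> 1"
    proof (rule ccontr)
      assume "\<not> q11 \<le> 1" then have "q11 \<ge> 2" by simp
      then have a: "(M*M-3*M-2)*q11 \<ge> (M*M-3*M-2)*2" using M MM cpos by (intro mult_left_mono) auto
      have "p1 + p2 \<ge> 2" using g1' q12z \<open>q11 \<ge> 2\<close> by simp
      then have b1: "M*(p1+p2) \<ge> M*2" using M by (intro mult_left_mono) auto
      have b: "M*p1 + (M+1)*p2 \<ge> 2*M" using b1 p1 by (simp add: algebra_simps; linarith)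
      show False using id a b X1 lt2 M MM D0 q12z by (linarith | (simp add: algebra_simps; linarith) | (simp add: algebra_simps))
    qed
    show ?thesis
    proof (cases "q11 = 1")
      case q1: True
      then have "p1 + p2 \<ge> 1" using g1' q12z by simp
      then consider "p1 \<ge> 1" | "p2 \<ge> 1" using p1 by linarith
      then show ?thesis
      proof cases
        case 1
        have "2*n = 2*(p1-1)*M + 2*p2*(M+1) + 0*(M*(M-1)) + 1*((M+1)*(M-2))"
          using id q1 D0 q12z by (linarith | (simp add: algebra_simps; linarith) | (simp add: algebra_simps))
        then show ?thesis using p1 1 by (intro exI[of _ "p1-1"] exI[of _ p2] exI[of _ 0] exI[of _ 1]) simp
      next
        case 2
        have "2*n = 2*p1*M + 2*(p2-1)*(M+1) + 1*(M*(M-1)) + 0*((M+1)*(M-2))"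
          using id q1 D0 q12z by (linarith | (simp add: algebra_simps; linarith) | (simp add: algebra_simps))
        then show ?thesis using p1 2 by (intro exI[of _ "p1"] exI[of _ "p2-1"] exI[of _ 1] exI[of _ 0]) simp
      qed
    next
      case False
      then have "q11 = 0" using q11le p1 by simp
      then have "2*n = 2*p1*M + 2*p2*(M+1) + 0*(M*(M-1)) + 0*((M+1)*(M-2))"
        using id D0 q12z by (linarith | (simp add: algebra_simps; linarith) | (simp add: algebra_simps))
      then show ?thesis using p1 by (intro exI[of _ "p1"] exI[of _ "p2"] exI[of _ 0] exI[of _ 0]) simp
    qed
  qed
qed


lemma runs_one:
  assumes ab: "a \<le> (b::nat)"
  shows "runs {a..b} = {{a..b}}"
proof -
  have "X \<in> runs {a..b} \<longleftrightarrow> X = {a..b}" for X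
  proof
    assume "X \<in> runs {a..b}"
    then obtain a' b' where X: "X = {a'..b'}" "a' \<le> b'" "{a'..b'} \<subseteq> {a..b}" "Suc b' \<notin> {a..b}"
      "\<forall>c. Suc c = a' \<longrightarrow> c \<notin> {a..b}" unfolding runs_def by blast
    have "a' \<in> {a..b}" "b' \<in> {a..b}" using X(2,3) by auto
    then have "a' = a" using X(5) by (cases a') auto
    moreover have "b' = b" using X(4) \<open>b' \<in> {a..b}\<close> by auto
    ultimately show "X = {a..b}" using X(1) by simp
  next
    assume "X = {a..b}"
    then show "X \<in> runs {a..b}" unfolding runs_def using ab by auto
  qed
  then show ?thesis by blast
qed

lemma runs_two:
  assumes ab: "a \<le> (b::nat)" and bc: "b + 2 \<le> c" and cd: "c \<le> d"
  shows "runs ({a..b} \<union> {c..d}) = {{a..b}, {c..d}}"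
proof -
  let ?I = "{a..b} \<union> {c..d}"
  have "X \<in> runs ?I \<longleftrightarrow> X = {a..b} \<or> X = {c..d}" for X
  proof
    assume "X \<in> runs ?I"
    then obtain a' b' where X: "X = {a'..b'}" "a' \<le> b'" "{a'..b'} \<subseteq> ?I" "Suc b' \<notin> ?I"
      "\<forall>c. Suc c = a' \<longrightarrow> c \<notin> ?I" unfolding runs_def by blast
    have a'I: "a' \<in> ?I" using X(2,3) by auto
    have b'I: "b' \<in> ?I" using X(2,3) by auto
    show "X = {a..b} \<or> X = {c..d}"
    proof (cases "a' \<le> b")
      case True
      then have "a' \<in> {a..b}" using a'I bc by auto
      then have a'a: "a' = a" using X(5) by (cases a') auto
      have "b' \<le> b"
      proof (rule ccontr)
        assume "\<not> b' \<le> b"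
        then have "Suc b \<in> {a'..b'}" using a'a ab by auto
        then show False using X(3) bc by auto
      qed
      then have "b' = b" using X(4) a'a X(2) by auto
      then show ?thesis using X(1) a'a by simp
    next
      case False
      then have "a' \<in> {c..d}" using a'I by auto
      then have a'a: "a' = c" using X(5) bc by (cases a') auto
      have "b' \<in> {c..d}" using b'I X(2) a'a bc by auto
      then have "b' = d" using X(4) by auto
      then show ?thesis using X(1) a'a by simp
    qed
  next
    assume "X = {a..b} \<or> X = {c..d}"
    then show "X \<in> runs ?I"
    proof
      assume "X = {a..b}"
      then show ?thesis unfolding runs_def using ab bc by (intro CollectI exI[of _ a] exI[of _ b]) auto
    next
      assume "X = {c..d}"
      then show ?thesis unfolding runs_def using ab bc cd by (intro CollectI exI[of _ c] exI[of _ d]) auto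
    qed
  qed
  then show ?thesis by blast
qed

lemma rd_one: "a \<le> (b::nat) \<Longrightarrow> run_decomp {a..b} = {#Suc b - a#}"
  unfolding run_decomp_def by (simp add: runs_one)

lemma rd_two: "a \<le> (b::nat) \<Longrightarrow> b + 2 \<le> c \<Longrightarrow> c \<le> d \<Longrightarrow>
   run_decomp ({a..b} \<union> {c..d}) = {#Suc b - a, Suc d - c#}"
proof -
  assume h: "a \<le> b" "b + 2 \<le> c" "c \<le> d"
  have ne: "{a..b} \<noteq> {c..d}" using h by (auto simp: set_eq_iff)
  show ?thesis unfolding run_decomp_def using h ne by (simp add: runs_two)
qed


locale hs =
  fixes U :: "'a set" and A :: "nat \<Rightarrow> 'a set" and m :: nat
  assumes finU: "finite U"
    and subA: "\<And>i. i \<in> {1..m} \<Longrightarrow> A i \<subseteq> U"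
    and compl: "(\<Union>i\<in>{1..m}. A i) = U"
    and harm: "harmonic U A m"
    and m51: "51 \<le> m"
    and tri: "\<forall>I. I \<subseteq> {1..m} \<and> card I = 3 \<and> nonconsecutive I \<longrightarrow> HI U A I = {}"
begin

definition S :: "'a \<Rightarrow> nat set" where "S x = {i \<in> {1..m}. x \<in> A i}"
definition h :: "nat set \<Rightarrow> nat" where "h T = card {x \<in> U. T \<subseteq> S x}"

lemma S_mem: "i \<in> S x \<longleftrightarrow> 1 \<le> i \<and> i \<le> m \<and> x \<in> A i"
  by (auto simp: S_def)
lemma S_sub: "S x \<subseteq> {1..m}" by (auto simp: S_def)
lemma S_fin: "finite (S x)" using S_sub finite_subset by blast
lemma S_0: "0 \<notin> S x" by (auto simp: S_def)
lemma S_ne: "x \<in> U \<Longrightarrow> S x \<noteq> {}" using compl by (auto simp: S_def)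

lemma HI_eq: assumes "T \<noteq> {}" "T \<subseteq> {1..m}" shows "HI U A T = {x \<in> U. T \<subseteq> S x}"
proof -
  obtain t where t: "t \<in> T" using assms(1) by blast
  have tm: "t \<in> {1..m}" using t assms(2) by blast
  show ?thesis
  proof (intro equalityI subsetI)
    fix x assume "x \<in> HI U A T"
    then have "\<forall>i\<in>T. x \<in> A i" using assms(1) by (simp add: HI_def)
    then show "x \<in> {x \<in> U. T \<subseteq> S x}" using t tm subA assms(2) by (auto simp: S_def)
  next
    fix x assume "x \<in> {x \<in> U. T \<subseteq> S x}"
    then show "x \<in> HI U A T" using assms(1) by (auto simp: HI_def S_def)
  qed
qed

lemma h_HI: "T \<noteq> {} \<Longrightarrow> T \<subseteq> {1..m} \<Longrightarrow> h T = card (HI U A T)"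
  by (simp add: h_def HI_eq)

lemma S_tf: assumes x: "x \<in> U" and ijk: "i \<in> S x" "j \<in> S x" "k \<in> S x" "i+2 \<le> j" "j+2 \<le> k"
  shows False
proof -
  let ?I = "{i,j,k}"
  have sub: "?I \<subseteq> {1..m}" using ijk by (auto simp: S_mem)
  have c3: "card ?I = 3" using ijk by auto
  have nc: "nonconsecutive ?I" unfolding nonconsecutive_def using ijk by auto
  have "HI U A ?I = {}" using tri sub c3 nc by blast
  moreover have "x \<in> HI U A ?I" using HI_eq[OF _ sub] x ijk by auto
  ultimately show False by simp
qed

lemma h_eq: assumes "T \<noteq> {}" "T' \<noteq> {}" "T \<subseteq> {1..m}" "T' \<subseteq> {1..m}"
    "run_decomp T = run_decomp T'" shows "h T = h T'"
proof -
  have "card (HI U A T) = card (HI U A T')" using harm assms(3-5) unfolding harmonic_def by blast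
  then show ?thesis using assms by (simp add: h_HI)
qed

definition C :: "nat \<Rightarrow> nat" where "C k = h {1..k}"
definition D :: "nat \<Rightarrow> nat \<Rightarrow> nat" where "D k l = h ({1..k} \<union> {k+2..k+l+1})"

lemma h_int: "1 \<le> a \<Longrightarrow> a \<le> b \<Longrightarrow> b \<le> m \<Longrightarrow> h {a..b} = C (Suc b - a)"
  unfolding C_def by (rule h_eq) (auto simp: rd_one)

lemma h_two: assumes "1 \<le> a" "a \<le> b" "b+2 \<le> c" "c \<le> d" "d \<le> m"
  shows "h ({a..b} \<union> {c..d}) = D (Suc b - a) (Suc d - c)"
  unfolding D_def
proof (rule h_eq)
  show "run_decomp ({a..b} \<union> {c..d}) = run_decomp ({1..Suc b - a} \<union> {Suc b - a + 2..Suc b - a + (Suc d - c) + 1})"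
    using assms by (simp add: rd_two)
qed (use assms in auto)

lemma D_sym: "D 2 1 = D 1 2"
proof -
  have a: "h ({1..2} \<union> {4..4}) = D 2 1" using h_two[of 1 2 4 4] m51 by simp
  have b: "h ({1..1} \<union> {3..4}) = D 1 2" using h_two[of 1 1 3 4] m51 by simp
  have r1: "run_decomp ({1..2} \<union> {4..4}) = {#2,1#}" using rd_two[of 1 2 4 4] by simp
  have r2: "run_decomp ({1..1} \<union> {3..4}) = {#2,1#}" using rd_two[of 1 1 3 4] by (simp add: add_mset_commute)
  have c: "h ({1..2} \<union> {4..4}) = h ({1..1} \<union> {3..4})"
    by (rule h_eq) (use m51 r1 r2 in auto)
  show ?thesis using a b c by simp
qed

lemma h1: "T = {a} \<Longrightarrow> 1 \<le> a \<Longrightarrow> a \<le> m \<Longrightarrow> h T = C 1"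
  using h_int[of a a] by simp
lemma h2: "T = {a,a+1} \<Longrightarrow> 1 \<le> a \<Longrightarrow> a+1 \<le> m \<Longrightarrow> h T = C 2"
  using h_int[of a "a+1"] by (simp add: atLeastAtMostSuc_conv insert_commute)
lemma h3: "T = {a,a+1,a+2} \<Longrightarrow> 1 \<le> a \<Longrightarrow> a+2 \<le> m \<Longrightarrow> h T = C 3"
proof -
  assume "T = {a,a+1,a+2}" "1 \<le> a" "a+2 \<le> m"
  moreover have "{a,a+1,a+2} = {a..a+2}" by auto
  ultimately show ?thesis using h_int[of a "a+2"] by (simp add: numeral_eq_Suc)
qed
lemma h4: "T = {a,a+1,a+2,a+3} \<Longrightarrow> 1 \<le> a \<Longrightarrow> a+3 \<le> m \<Longrightarrow> h T = C 4"
proof -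
  assume "T = {a,a+1,a+2,a+3}" "1 \<le> a" "a+3 \<le> m"
  moreover have "{a,a+1,a+2,a+3} = {a..a+3}" by auto
  ultimately show ?thesis using h_int[of a "a+3"] by (simp add: numeral_eq_Suc)
qed
lemma h11: assumes "T = {a,b}" "1 \<le> a" "a+2 \<le> b" "b \<le> m" shows "h T = D 1 1"
proof -
  have e: "T = {a..a} \<union> {b..b}" using assms by auto
  have "h ({a..a} \<union> {b..b}) = D 1 1" using h_two[of a a b b] assms by simp
  then show ?thesis using e by simp
qed
lemma h12: assumes "T = {a,b,b+1}" "1 \<le> a" "a+2 \<le> b" "b+1 \<le> m" shows "h T = D 1 2"
proof -
  have e: "T = {a..a} \<union> {b..b+1}" using assms by auto
  have "h ({a..a} \<union> {b..b+1}) = D 1 2" using h_two[of a a b "b+1"] assms by simp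
  then show ?thesis using e by simp
qed
lemma h21: assumes "T = {a,a+1,b}" "1 \<le> a" "a+3 \<le> b" "b \<le> m" shows "h T = D 1 2"
proof -
  have e: "T = {a..a+1} \<union> {b..b}" using assms by auto
  have "h ({a..a+1} \<union> {b..b}) = D 1 2" using h_two[of a "a+1" b b] assms D_sym by simp
  then show ?thesis using e by simp
qed
lemma h22: assumes "T = {a,a+1,b,b+1}" "1 \<le> a" "a+3 \<le> b" "b+1 \<le> m" shows "h T = D 2 2"
proof -
  have e: "T = {a..a+1} \<union> {b..b+1}" using assms by auto
  have "h ({a..a+1} \<union> {b..b+1}) = D 2 2" using h_two[of a "a+1" b "b+1"] assms by simp
  then show ?thesis using e by simp
qed

end


lemma card_filter_sum: "finite J \<Longrightarrow> card {p\<in>J. P p} = (\<Sum>p\<in>J. if P p then 1 else 0)"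
  by (simp add: sum.If_cases Int_def)

context hs begin

lemma S_shp: "x \<in> U \<Longrightarrow> shp (S x)"
  by (rule shape') (use S_fin S_ne S_tf in auto)

lemma swap:
  assumes "finite J"
  shows "(\<Sum>x\<in>{x\<in>U. W \<subseteq> S x}. card {p\<in>J. T p \<subseteq> S x}) = (\<Sum>p\<in>J. h (W \<union> T p))"
proof -
  let ?H = "{x\<in>U. W \<subseteq> S x}"
  have fH: "finite ?H" using finU by simp
  have "(\<Sum>x\<in>?H. card {p\<in>J. T p \<subseteq> S x}) = (\<Sum>x\<in>?H. \<Sum>p\<in>J. if T p \<subseteq> S x then 1 else 0)"
    using assms by (simp add: card_filter_sum)
  also have "\<dots> = (\<Sum>p\<in>J. \<Sum>x\<in>?H. if T p \<subseteq> S x then 1 else 0)" by (rule sum.swap)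
  also have "\<dots> = (\<Sum>p\<in>J. h (W \<union> T p))"
  proof (rule sum.cong[OF refl])
    fix p
    have "(\<Sum>x\<in>?H. if T p \<subseteq> S x then 1 else 0) = card {x\<in>?H. T p \<subseteq> S x}"
      by (rule card_filter_sum[OF fH, symmetric])
    also have "{x\<in>?H. T p \<subseteq> S x} = {x\<in>U. W \<union> T p \<subseteq> S x}" by auto
    finally show "(\<Sum>x\<in>?H. if T p \<subseteq> S x then 1 else 0) = h (W \<union> T p)" by (simp add: h_def)
  qed
  finally show ?thesis .
qed

lemma sum_io: "(\<Sum>x\<in>{x\<in>U. W \<subseteq> S x}. io T (S x)) = int (h (W \<union> T))"
proof -
  let ?H = "{x\<in>U. W \<subseteq> S x}"
  have fH: "finite ?H" using finU by simp
  have "(\<Sum>x\<in>?H. io T (S x)) = (\<Sum>x\<in>?H. int (if T \<subseteq> S x then 1 else 0))"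
    by (intro sum.cong) (auto simp: io_def)
  also have "\<dots> = int (\<Sum>x\<in>?H. if T \<subseteq> S x then 1 else 0)"
    by (simp only: of_nat_sum)
  also have "(\<Sum>x\<in>?H. if T \<subseteq> S x then 1 else 0) = card {x\<in>?H. T \<subseteq> S x}"
    by (rule card_filter_sum[OF fH, symmetric])
  also have "{x\<in>?H. T \<subseteq> S x} = {x\<in>U. W \<union> T \<subseteq> S x}" by auto
  finally show ?thesis by (simp add: h_def)
qed

lemma sum_one: "(\<Sum>x\<in>{x\<in>U. W \<subseteq> S x}. (1::int)) = int (h W)"
  by (simp add: h_def)

lemma termG:
  assumes J: "finite J" and f: "\<And>x. x \<in> U \<Longrightarrow> f x = card {p\<in>J. T p \<subseteq> S x}"
    and v: "\<And>p. p \<in> J \<Longrightarrow> h (W \<union> T p) = v" and cJ: "card J = k"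
  shows "(\<Sum>x\<in>{x\<in>U. W \<subseteq> S x}. int (f x)) = int k * int v"
proof -
  have "(\<Sum>x\<in>{x\<in>U. W \<subseteq> S x}. int (f x)) = int (\<Sum>x\<in>{x\<in>U. W \<subseteq> S x}. card {p\<in>J. T p \<subseteq> S x})"
    using f by (simp add: of_nat_sum)
  also have "\<dots> = int (\<Sum>p\<in>J. h (W \<union> T p))" using swap[OF J] by simp
  also have "\<dots> = int (card J * v)" using v by simp
  finally show ?thesis using cJ by simp
qed

lemma g1_nn:
  "int (C 1) - int (C 2) + int (C 3) - int (C 4) - int (m-2) * int (D 1 1)
     + 2 * int (m-3) * int (D 1 2) - int (m-4) * int (D 2 2) \<ge> 0"
proof -
  let ?H = "{x\<in>U. {1} \<subseteq> S x}"
  have nn: "0 \<le> (\<Sum>x\<in>?H. R1 (S x))"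
    by (rule sum_nonneg) (use R1_sh S_shp S_0 in auto)
  have e0: "(\<Sum>x\<in>?H. (1::int)) = int (C 1)" using sum_one[of "{1}"] h1[of "{1}" 1] m51 by simp
  have e1: "(\<Sum>x\<in>?H. io {2} (S x)) = int (C 2)"
  proof -
    have "h ({1} \<union> {2}) = C 2" by (rule h2[of _ 1]) (use m51 in auto)
    then show ?thesis using sum_io[where W="{1}" and T="{2}"] by simp
  qed
  have e2: "(\<Sum>x\<in>?H. io {2,3} (S x)) = int (C 3)"
  proof -
    have "h ({1} \<union> {2,3}) = C 3" by (rule h3[of _ 1]) (use m51 in auto)
    then show ?thesis using sum_io[where W="{1}" and T="{2,3}"] by simp
  qed
  have e3: "(\<Sum>x\<in>?H. io {2,3,4} (S x)) = int (C 4)"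
  proof -
    have "h ({1} \<union> {2,3,4}) = C 4" by (rule h4[of _ 1]) (use m51 in auto)
    then show ?thesis using sum_io[where W="{1}" and T="{2,3,4}"] by simp
  qed
  have e4: "(\<Sum>x\<in>?H. int (card (flt (\<lambda>j. 3 \<le> j) (S x)))) = int (m-2) * int (D 1 1)"
  proof (rule termG[where J="{3..m}" and T="\<lambda>j. {j}"])
    show "card (flt (\<lambda>j. 3 \<le> j) (S x)) = card {p\<in>{3..m}. {p} \<subseteq> S x}" for x
      by (rule arg_cong[where f=card]) (auto simp: S_mem flt_def)
    show "h ({1} \<union> {p}) = D 1 1" if "p \<in> {3..m}" for p using that by (intro h11[of _ 1 p]) auto
  qed (use m51 in auto)
  have e5: "(\<Sum>x\<in>?H. int (card (flt (\<lambda>j. j+1 \<in> S x \<and> 3 \<le> j) (S x)))) = int (m-3) * int (D 1 2)"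
  proof (rule termG[where J="{3..m-1}" and T="\<lambda>j. {j,j+1}"])
    show "card (flt (\<lambda>j. j+1 \<in> S x \<and> 3 \<le> j) (S x)) = card {p\<in>{3..m-1}. {p,p+1} \<subseteq> S x}" for x
      by (rule arg_cong[where f=card]) (auto simp: S_mem flt_def)
    show "h ({1} \<union> {p,p+1}) = D 1 2" if "p \<in> {3..m-1}" for p using that by (intro h12[of _ 1 p]) auto
  qed (use m51 in auto)
  have e6: "(\<Sum>x\<in>?H. int (card (flt (\<lambda>j. 2 \<in> S x \<and> 4 \<le> j) (S x)))) = int (m-3) * int (D 1 2)"
  proof (rule termG[where J="{4..m}" and T="\<lambda>j. {2,j}"])
    show "card (flt (\<lambda>j. 2 \<in> S x \<and> 4 \<le> j) (S x)) = card {p\<in>{4..m}. {2,p} \<subseteq> S x}" for x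
      by (rule arg_cong[where f=card]) (auto simp: S_mem flt_def)
    show "h ({1} \<union> {2,p}) = D 1 2" if "p \<in> {4..m}" for p using that by (intro h21[of _ 1 p]) auto
  qed (use m51 in auto)
  have e7: "(\<Sum>x\<in>?H. int (card (flt (\<lambda>j. 2 \<in> S x \<and> j+1 \<in> S x \<and> 4 \<le> j) (S x)))) = int (m-4) * int (D 2 2)"
  proof (rule termG[where J="{4..m-1}" and T="\<lambda>j. {2,j,j+1}"])
    show "card (flt (\<lambda>j. 2 \<in> S x \<and> j+1 \<in> S x \<and> 4 \<le> j) (S x)) = card {p\<in>{4..m-1}. {2,p,p+1} \<subseteq> S x}" for x
      by (rule arg_cong[where f=card]) (auto simp: S_mem flt_def)
    show "h ({1} \<union> {2,p,p+1}) = D 2 2" if "p \<in> {4..m-1}" for p using that by (intro h22[of _ 1 p]) auto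
  qed (use m51 in auto)
  have "(\<Sum>x\<in>?H. R1 (S x)) = int (C 1) - int (C 2) + int (C 3) - int (C 4) - int (m-2) * int (D 1 1)
     + int (m-3) * int (D 1 2) + int (m-3) * int (D 1 2) - int (m-4) * int (D 2 2)"
    unfolding R1_def by (simp only: sum.distrib sum_subtractf e0 e1 e2 e3 e4 e5 e6 e7)
  then show ?thesis using nn by simp
qed


lemma p2_nn:
  "int (C 2) - 2 * int (C 3) + 3 * int (C 4) - int (m-4) * int (D 1 2) + int (m-6) * int (D 2 2) \<ge> 0"
proof -
  let ?H = "{x\<in>U. {4,5} \<subseteq> S x}"
  have nn: "0 \<le> (\<Sum>x\<in>?H. R45 (S x))"
    by (rule sum_nonneg) (use R45_sh S_shp S_0 in auto)
  have e0: "(\<Sum>x\<in>?H. (1::int)) = int (C 2)" using sum_one[of "{4,5}"] h2[of "{4,5}" 4] m51 by simp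
  have e1: "(\<Sum>x\<in>?H. io {3} (S x)) = int (C 3)"
  proof -
    have "h ({4,5} \<union> {3}) = C 3" by (rule h3[of _ 3]) (use m51 in auto)
    then show ?thesis using sum_io[where W="{4,5}" and T="{3}"] by simp
  qed
  have e2: "(\<Sum>x\<in>?H. io {6} (S x)) = int (C 3)"
  proof -
    have "h ({4,5} \<union> {6}) = C 3" by (rule h3[of _ 4]) (use m51 in auto)
    then show ?thesis using sum_io[where W="{4,5}" and T="{6}"] by simp
  qed
  have e3: "(\<Sum>x\<in>?H. io {2,3} (S x)) = int (C 4)"
  proof -
    have "h ({4,5} \<union> {2,3}) = C 4" by (rule h4[of _ 2]) (use m51 in auto)
    then show ?thesis using sum_io[where W="{4,5}" and T="{2,3}"] by simp
  qed
  have e4: "(\<Sum>x\<in>?H. io {3,6} (S x)) = int (C 4)"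
  proof -
    have "h ({4,5} \<union> {3,6}) = C 4" by (rule h4[of _ 3]) (use m51 in auto)
    then show ?thesis using sum_io[where W="{4,5}" and T="{3,6}"] by simp
  qed
  have e5: "(\<Sum>x\<in>?H. io {6,7} (S x)) = int (C 4)"
  proof -
    have "h ({4,5} \<union> {6,7}) = C 4" by (rule h4[of _ 4]) (use m51 in auto)
    then show ?thesis using sum_io[where W="{4,5}" and T="{6,7}"] by simp
  qed
  have e6: "(\<Sum>x\<in>?H. int (card (flt (\<lambda>j. j \<le> 2 \<or> 7 \<le> j) (S x)))) = int (m-4) * int (D 1 2)"
  proof (rule termG[where J="{1,2} \<union> {7..m}" and T="\<lambda>j. {j}"])
    show "card (flt (\<lambda>j. j \<le> 2 \<or> 7 \<le> j) (S x)) = card {p\<in>{1,2} \<union> {7..m}. (\<lambda>j. {j}) p \<subseteq> S x}" for x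
      by (rule arg_cong[where f=card]) (auto simp: S_mem flt_def)
    show "card ({1,2} \<union> {7..m}) = m-4" using m51 by (simp add: card_Un_disjoint)
    show "h ({4,5} \<union> (\<lambda>j. {j}) p) = D 1 2" if p: "p \<in> {1,2} \<union> {7..m}" for p
    proof (cases "p \<le> 2")
      case True then show ?thesis using p m51 by (intro h12[of _ "p" "4"]) auto
    next
      case False then show ?thesis using p m51 by (intro h21[of _ "4" "p"]) auto
    qed
  qed (use m51 in auto)
  have e7: "(\<Sum>x\<in>?H. int (card (flt (\<lambda>j. j+1 \<in> S x \<and> (j+1 \<le> 2 \<or> 7 \<le> j)) (S x)))) = int (m-6) * int (D 2 2)"
  proof (rule termG[where J="{1} \<union> {7..m-1}" and T="\<lambda>j. {j,j+1}"])
    show "card (flt (\<lambda>j. j+1 \<in> S x \<and> (j+1 \<le> 2 \<or> 7 \<le> j)) (S x)) = card {p\<in>{1} \<union> {7..m-1}. (\<lambda>j. {j,j+1}) p \<subseteq> S x}" for x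
      by (rule arg_cong[where f=card]) (auto simp: S_mem flt_def)
    show "card ({1} \<union> {7..m-1}) = m-6" using m51 by (simp add: card_Un_disjoint)
    show "h ({4,5} \<union> (\<lambda>j. {j,j+1}) p) = D 2 2" if p: "p \<in> {1} \<union> {7..m-1}" for p
    proof (cases "p \<le> 2")
      case True then show ?thesis using p m51 by (intro h22[of _ "1" "4"]) auto
    next
      case False then show ?thesis using p m51 by (intro h22[of _ "4" "p"]) auto
    qed
  qed (use m51 in auto)
  have "(\<Sum>x\<in>?H. R45 (S x)) = int (C 2) - int (C 3) - int (C 3) + int (C 4) + int (C 4) + int (C 4)
     - int (m-4) * int (D 1 2) + int (m-6) * int (D 2 2)"
    unfolding R45_def by (simp only: sum.distrib sum_subtractf e0 e1 e2 e3 e4 e5 e6 e7)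
  then show ?thesis using nn by simp
qed


lemma p1_nn:
  "int (C 1) - 2 * int (C 2) + 3 * int (C 3) - 4 * int (C 4) - int (m-3) * int (D 1 1)
    + (int (m-5) + int (m-4) + int (m-4)) * int (D 1 2) - (int (m-6) + int (m-6)) * int (D 2 2) \<ge> 0"
proof -
  let ?H = "{x\<in>U. {4} \<subseteq> S x}"
  have nn: "0 \<le> (\<Sum>x\<in>?H. R4 (S x))"
    by (rule sum_nonneg) (use R4_sh S_shp S_0 in auto)
  have e0: "(\<Sum>x\<in>?H. (1::int)) = int (C 1)" using sum_one[of "{4}"] h1[of "{4}" 4] m51 by simp
  have e1: "(\<Sum>x\<in>?H. io {3} (S x)) = int (C 2)"
  proof -
    have "h ({4} \<union> {3}) = C 2" by (rule h2[of _ 3]) (use m51 in auto)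
    then show ?thesis using sum_io[where W="{4}" and T="{3}"] by simp
  qed
  have e2: "(\<Sum>x\<in>?H. io {5} (S x)) = int (C 2)"
  proof -
    have "h ({4} \<union> {5}) = C 2" by (rule h2[of _ 4]) (use m51 in auto)
    then show ?thesis using sum_io[where W="{4}" and T="{5}"] by simp
  qed
  have e3: "(\<Sum>x\<in>?H. io {2,3} (S x)) = int (C 3)"
  proof -
    have "h ({4} \<union> {2,3}) = C 3" by (rule h3[of _ 2]) (use m51 in auto)
    then show ?thesis using sum_io[where W="{4}" and T="{2,3}"] by simp
  qed
  have e4: "(\<Sum>x\<in>?H. io {3,5} (S x)) = int (C 3)"
  proof -
    have "h ({4} \<union> {3,5}) = C 3" by (rule h3[of _ 3]) (use m51 in auto)
    then show ?thesis using sum_io[where W="{4}" and T="{3,5}"] by simp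
  qed
  have e5: "(\<Sum>x\<in>?H. io {5,6} (S x)) = int (C 3)"
  proof -
    have "h ({4} \<union> {5,6}) = C 3" by (rule h3[of _ 4]) (use m51 in auto)
    then show ?thesis using sum_io[where W="{4}" and T="{5,6}"] by simp
  qed
  have e6: "(\<Sum>x\<in>?H. io {1,2,3} (S x)) = int (C 4)"
  proof -
    have "h ({4} \<union> {1,2,3}) = C 4" by (rule h4[of _ 1]) (use m51 in auto)
    then show ?thesis using sum_io[where W="{4}" and T="{1,2,3}"] by simp
  qed
  have e7: "(\<Sum>x\<in>?H. io {2,3,5} (S x)) = int (C 4)"
  proof -
    have "h ({4} \<union> {2,3,5}) = C 4" by (rule h4[of _ 2]) (use m51 in auto)
    then show ?thesis using sum_io[where W="{4}" and T="{2,3,5}"] by simp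
  qed
  have e8: "(\<Sum>x\<in>?H. io {3,5,6} (S x)) = int (C 4)"
  proof -
    have "h ({4} \<union> {3,5,6}) = C 4" by (rule h4[of _ 3]) (use m51 in auto)
    then show ?thesis using sum_io[where W="{4}" and T="{3,5,6}"] by simp
  qed
  have e9: "(\<Sum>x\<in>?H. io {5,6,7} (S x)) = int (C 4)"
  proof -
    have "h ({4} \<union> {5,6,7}) = C 4" by (rule h4[of _ 4]) (use m51 in auto)
    then show ?thesis using sum_io[where W="{4}" and T="{5,6,7}"] by simp
  qed
  have e10: "(\<Sum>x\<in>?H. int (card (flt (\<lambda>j. j \<le> 2 \<or> 6 \<le> j) (S x)))) = int (m-3) * int (D 1 1)"
  proof (rule termG[where J="{1,2} \<union> {6..m}" and T="\<lambda>j. {j}"])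
    show "card (flt (\<lambda>j. j \<le> 2 \<or> 6 \<le> j) (S x)) = card {p\<in>{1,2} \<union> {6..m}. (\<lambda>j. {j}) p \<subseteq> S x}" for x
      by (rule arg_cong[where f=card]) (auto simp: S_mem flt_def)
    show "card ({1,2} \<union> {6..m}) = m-3" using m51 by (simp add: card_Un_disjoint)
    show "h ({4} \<union> (\<lambda>j. {j}) p) = D 1 1" if p: "p \<in> {1,2} \<union> {6..m}" for p
    proof (cases "p \<le> 2")
      case True then show ?thesis using p m51 by (intro h11[of _ "p" "4"]) auto
    next
      case False then show ?thesis using p m51 by (intro h11[of _ "4" "p"]) auto
    qed
  qed (use m51 in auto)
  have e11: "(\<Sum>x\<in>?H. int (card (flt (\<lambda>j. j+1 \<in> S x \<and> (j+1 \<le> 2 \<or> 6 \<le> j)) (S x)))) = int (m-5) * int (D 1 2)"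
  proof (rule termG[where J="{1} \<union> {6..m-1}" and T="\<lambda>j. {j,j+1}"])
    show "card (flt (\<lambda>j. j+1 \<in> S x \<and> (j+1 \<le> 2 \<or> 6 \<le> j)) (S x)) = card {p\<in>{1} \<union> {6..m-1}. (\<lambda>j. {j,j+1}) p \<subseteq> S x}" for x
      by (rule arg_cong[where f=card]) (auto simp: S_mem flt_def)
    show "card ({1} \<union> {6..m-1}) = m-5" using m51 by (simp add: card_Un_disjoint)
    show "h ({4} \<union> (\<lambda>j. {j,j+1}) p) = D 1 2" if p: "p \<in> {1} \<union> {6..m-1}" for p
    proof (cases "p \<le> 2")
      case True then show ?thesis using p m51 by (intro h21[of _ "1" "4"]) auto
    next
      case False then show ?thesis using p m51 by (intro h12[of _ "4" "p"]) auto
    qed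
  qed (use m51 in auto)
  have e12: "(\<Sum>x\<in>?H. int (card (flt (\<lambda>j. 3 \<in> S x \<and> (j \<le> 1 \<or> 6 \<le> j)) (S x)))) = int (m-4) * int (D 1 2)"
  proof (rule termG[where J="{1} \<union> {6..m}" and T="\<lambda>j. {3,j}"])
    show "card (flt (\<lambda>j. 3 \<in> S x \<and> (j \<le> 1 \<or> 6 \<le> j)) (S x)) = card {p\<in>{1} \<union> {6..m}. (\<lambda>j. {3,j}) p \<subseteq> S x}" for x
      by (rule arg_cong[where f=card]) (auto simp: S_mem flt_def)
    show "card ({1} \<union> {6..m}) = m-4" using m51 by (simp add: card_Un_disjoint)
    show "h ({4} \<union> (\<lambda>j. {3,j}) p) = D 1 2" if p: "p \<in> {1} \<union> {6..m}" for p
    proof (cases "p \<le> 2")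
      case True then show ?thesis using p m51 by (intro h12[of _ "1" "3"]) auto
    next
      case False then show ?thesis using p m51 by (intro h21[of _ "3" "p"]) auto
    qed
  qed (use m51 in auto)
  have e13: "(\<Sum>x\<in>?H. int (card (flt (\<lambda>j. 5 \<in> S x \<and> (j \<le> 2 \<or> 7 \<le> j)) (S x)))) = int (m-4) * int (D 1 2)"
  proof (rule termG[where J="{1,2} \<union> {7..m}" and T="\<lambda>j. {5,j}"])
    show "card (flt (\<lambda>j. 5 \<in> S x \<and> (j \<le> 2 \<or> 7 \<le> j)) (S x)) = card {p\<in>{1,2} \<union> {7..m}. (\<lambda>j. {5,j}) p \<subseteq> S x}" for x
      by (rule arg_cong[where f=card]) (auto simp: S_mem flt_def)
    show "card ({1,2} \<union> {7..m}) = m-4" using m51 by (simp add: card_Un_disjoint)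
    show "h ({4} \<union> (\<lambda>j. {5,j}) p) = D 1 2" if p: "p \<in> {1,2} \<union> {7..m}" for p
    proof (cases "p \<le> 2")
      case True then show ?thesis using p m51 by (intro h12[of _ "p" "4"]) auto
    next
      case False then show ?thesis using p m51 by (intro h21[of _ "4" "p"]) auto
    qed
  qed (use m51 in auto)
  have e14: "(\<Sum>x\<in>?H. int (card (flt (\<lambda>j. 3 \<in> S x \<and> j+1 \<in> S x \<and> 6 \<le> j) (S x)))) = int (m-6) * int (D 2 2)"
  proof (rule termG[where J="{6..m-1}" and T="\<lambda>j. {3,j,j+1}"])
    show "card (flt (\<lambda>j. 3 \<in> S x \<and> j+1 \<in> S x \<and> 6 \<le> j) (S x)) = card {p\<in>{6..m-1}. (\<lambda>j. {3,j,j+1}) p \<subseteq> S x}" for x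
      by (rule arg_cong[where f=card]) (auto simp: S_mem flt_def)
    show "card ({6..m-1}) = m-6" using m51 by (simp add: card_Un_disjoint)
    show "h ({4} \<union> (\<lambda>j. {3,j,j+1}) p) = D 2 2" if p: "p \<in> {6..m-1}" for p
      using p m51 by (intro h22[of _ "3" "p"]) auto
  qed (use m51 in auto)
  have e15: "(\<Sum>x\<in>?H. int (card (flt (\<lambda>j. 5 \<in> S x \<and> j+1 \<in> S x \<and> (j+1 \<le> 2 \<or> 7 \<le> j)) (S x)))) = int (m-6) * int (D 2 2)"
  proof (rule termG[where J="{1} \<union> {7..m-1}" and T="\<lambda>j. {5,j,j+1}"])
    show "card (flt (\<lambda>j. 5 \<in> S x \<and> j+1 \<in> S x \<and> (j+1 \<le> 2 \<or> 7 \<le> j)) (S x)) = card {p\<in>{1} \<union> {7..m-1}. (\<lambda>j. {5,j,j+1}) p \<subseteq> S x}" for x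
      by (rule arg_cong[where f=card]) (auto simp: S_mem flt_def)
    show "card ({1} \<union> {7..m-1}) = m-6" using m51 by (simp add: card_Un_disjoint)
    show "h ({4} \<union> (\<lambda>j. {5,j,j+1}) p) = D 2 2" if p: "p \<in> {1} \<union> {7..m-1}" for p
    proof (cases "p \<le> 2")
      case True then show ?thesis using p m51 by (intro h22[of _ "1" "4"]) auto
    next
      case False then show ?thesis using p m51 by (intro h22[of _ "4" "p"]) auto
    qed
  qed (use m51 in auto)
  have "(\<Sum>x\<in>?H. R4 (S x)) = int (C 1) - int (C 2) - int (C 2) + int (C 3) + int (C 3) + int (C 3)
     - int (C 4) - int (C 4) - int (C 4) - int (C 4) - int (m-3) * int (D 1 1) + int (m-5) * int (D 1 2)
     + int (m-4) * int (D 1 2) + int (m-4) * int (D 1 2) - int (m-6) * int (D 2 2) - int (m-6) * int (D 2 2)"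
    unfolding R4_def by (simp only: sum.distrib sum_subtractf e0 e1 e2 e3 e4 e5 e6 e7 e8 e9 e10 e11 e12 e13 e14 e15)
  then show ?thesis using nn by (simp add: algebra_simps)
qed

lemma q11_nn: "int (D 1 1) - 4 * int (D 1 2) + 4 * int (D 2 2) \<ge> 0"
proof -
  let ?H = "{x\<in>U. {10,20} \<subseteq> S x}"
  define R where "R Z = 1 - io {9} Z - io {11} Z - io {19} Z - io {21} Z + io {9,19} Z + io {9,21} Z + io {11,19} Z + io {11,21} Z" for Z
  have nn: "0 \<le> (\<Sum>x\<in>?H. R (S x))"
  proof (rule sum_nonneg)
    fix x assume x: "x \<in> ?H"
    have a: "\<not> (9 \<in> S x \<and> 11 \<in> S x)" using S_tf[of x 9 11 20] x by auto
    have b: "\<not> (19 \<in> S x \<and> 21 \<in> S x)" using S_tf[of x 10 19 21] x by auto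
    show "0 \<le> R (S x)" using a b unfolding R_def io_def by auto
  qed
  have e0: "(\<Sum>x\<in>?H. (1::int)) = int (D 1 1)" using sum_one[of "{10,20}"] h11[of "{10,20}" 10 20] m51 by simp
  have e1: "(\<Sum>x\<in>?H. io {9} (S x)) = int (D 1 2)"
  proof - have "h ({10,20} \<union> {9}) = D 1 2" by (rule h21[of _ 9 20]) (use m51 in auto)
    then show ?thesis using sum_io[where W="{10,20}" and T="{9}"] by simp qed
  have e2: "(\<Sum>x\<in>?H. io {11} (S x)) = int (D 1 2)"
  proof - have "h ({10,20} \<union> {11}) = D 1 2" by (rule h21[of _ 10 20]) (use m51 in auto)
    then show ?thesis using sum_io[where W="{10,20}" and T="{11}"] by simp qed
  have e3: "(\<Sum>x\<in>?H. io {19} (S x)) = int (D 1 2)"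
  proof - have "h ({10,20} \<union> {19}) = D 1 2" by (rule h12[of _ 10 19]) (use m51 in auto)
    then show ?thesis using sum_io[where W="{10,20}" and T="{19}"] by simp qed
  have e4: "(\<Sum>x\<in>?H. io {21} (S x)) = int (D 1 2)"
  proof - have "h ({10,20} \<union> {21}) = D 1 2" by (rule h12[of _ 10 20]) (use m51 in auto)
    then show ?thesis using sum_io[where W="{10,20}" and T="{21}"] by simp qed
  have e5: "(\<Sum>x\<in>?H. io {9,19} (S x)) = int (D 2 2)"
  proof - have "h ({10,20} \<union> {9,19}) = D 2 2" by (rule h22[of _ 9 19]) (use m51 in auto)
    then show ?thesis using sum_io[where W="{10,20}" and T="{9,19}"] by simp qed
  have e6: "(\<Sum>x\<in>?H. io {9,21} (S x)) = int (D 2 2)"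
  proof - have "h ({10,20} \<union> {9,21}) = D 2 2" by (rule h22[of _ 9 20]) (use m51 in auto)
    then show ?thesis using sum_io[where W="{10,20}" and T="{9,21}"] by simp qed
  have e7: "(\<Sum>x\<in>?H. io {11,19} (S x)) = int (D 2 2)"
  proof - have "h ({10,20} \<union> {11,19}) = D 2 2" by (rule h22[of _ 10 19]) (use m51 in auto)
    then show ?thesis using sum_io[where W="{10,20}" and T="{11,19}"] by simp qed
  have e8: "(\<Sum>x\<in>?H. io {11,21} (S x)) = int (D 2 2)"
  proof - have "h ({10,20} \<union> {11,21}) = D 2 2" by (rule h22[of _ 10 20]) (use m51 in auto)
    then show ?thesis using sum_io[where W="{10,20}" and T="{11,21}"] by simp qed
  have "(\<Sum>x\<in>?H. R (S x)) = int (D 1 1) - int (D 1 2) - int (D 1 2) - int (D 1 2) - int (D 1 2)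
     + int (D 2 2) + int (D 2 2) + int (D 2 2) + int (D 2 2)"
    unfolding R_def by (simp only: sum.distrib sum_subtractf e0 e1 e2 e3 e4 e5 e6 e7 e8)
  then show ?thesis using nn by simp
qed

lemma q12_nn: "int (D 1 2) - 2 * int (D 2 2) \<ge> 0"
proof -
  let ?H = "{x\<in>U. {10,20,21} \<subseteq> S x}"
  define R where "R Z = 1 - io {9} Z - io {11} Z" for Z
  have nn: "0 \<le> (\<Sum>x\<in>?H. R (S x))"
  proof (rule sum_nonneg)
    fix x assume x: "x \<in> ?H"
    have a: "\<not> (9 \<in> S x \<and> 11 \<in> S x)" using S_tf[of x 9 11 20] x by auto
    show "0 \<le> R (S x)" using a unfolding R_def io_def by auto
  qed
  have e0: "(\<Sum>x\<in>?H. (1::int)) = int (D 1 2)" using sum_one[of "{10,20,21}"] h12[of "{10,20,21}" 10 20] m51 by simp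
  have e1: "(\<Sum>x\<in>?H. io {9} (S x)) = int (D 2 2)"
  proof - have "h ({10,20,21} \<union> {9}) = D 2 2" by (rule h22[of _ 9 20]) (use m51 in auto)
    then show ?thesis using sum_io[where W="{10,20,21}" and T="{9}"] by simp qed
  have e2: "(\<Sum>x\<in>?H. io {11} (S x)) = int (D 2 2)"
  proof - have "h ({10,20,21} \<union> {11}) = D 2 2" by (rule h22[of _ 10 20]) (use m51 in auto)
    then show ?thesis using sum_io[where W="{10,20,21}" and T="{11}"] by simp qed
  have "(\<Sum>x\<in>?H. R (S x)) = int (D 1 2) - int (D 2 2) - int (D 2 2)"
    unfolding R_def by (simp only: sum.distrib sum_subtractf e0 e1 e2)
  then show ?thesis using nn by simp
qed

end


lemma pc_fin: "finite {(i,j). 1 \<le> i \<and> i+k \<le> j \<and> j \<le> (M::nat)}"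
  by (rule finite_subset[of _ "{0..M} \<times> {0..M}"]) auto

lemma pc: "2 * card {(i,j). 1 \<le> i \<and> i+k \<le> j \<and> j \<le> (M::nat)} = (M-k)*(M-k+1)"
proof (induction M)
  case 0
  have e: "{(i,j). 1 \<le> i \<and> i+k \<le> j \<and> j \<le> (0::nat)} = {}" by auto
  show ?case by (subst e) simp
next
  case (Suc M)
  let ?A = "{(i,j). 1 \<le> i \<and> i+k \<le> j \<and> j \<le> M}"
  let ?B = "(\<lambda>i. (i, Suc M)) ` {1..Suc M - k}"
  have eq: "{(i,j). 1 \<le> i \<and> i+k \<le> j \<and> j \<le> Suc M} = ?A \<union> ?B" by auto
  have dis: "?A \<inter> ?B = {}" by auto
  have cB: "card ?B = Suc M - k" by (subst card_image) (auto simp: inj_on_def)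
  have "2 * card ({(i,j). 1 \<le> i \<and> i+k \<le> j \<and> j \<le> Suc M}) = 2 * card ?A + 2 * (Suc M - k)"
    unfolding eq using dis pc_fin cB by (simp add: card_Un_disjoint)
  also have "\<dots> = (M-k)*(M-k+1) + 2 * (Suc M - k)" using Suc by simp
  also have "\<dots> = (Suc M - k) * (Suc M - k + 1)"
  proof (cases "k \<le> M")
    case True
    then obtain t where "M = k + t" using le_Suc_ex by blast
    then show ?thesis by (simp add: Suc_diff_le algebra_simps)
  next
    case False
    then show ?thesis by simp
  qed
  finally show ?case .
qed

context hs begin

lemma termU:
  assumes J: "finite J" and f: "\<And>x. x \<in> U \<Longrightarrow> f x = card {p\<in>J. T p \<subseteq> S x}"
    and v: "\<And>p. p \<in> J \<Longrightarrow> h (T p) = v" and cJ: "card J = k"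
  shows "(\<Sum>x\<in>U. int (f x)) = int k * int v"
  using termG[of J f T "{}" v k] assms by simp

lemma n_formula:
  defines "K11 \<equiv> card {(i,j). 1 \<le> i \<and> i+2 \<le> j \<and> j \<le> m}"
    and "K12a \<equiv> card {(i,j). 1 \<le> i \<and> i+2 \<le> j \<and> j \<le> m-1}"
    and "K12b \<equiv> card {(i,j). 1 \<le> i \<and> i+3 \<le> j \<and> j \<le> m}"
    and "K22 \<equiv> card {(i,j). 1 \<le> i \<and> i+3 \<le> j \<and> j \<le> m-1}"
  shows "int (card U) = int m * int (C 1) - int (m-1) * int (C 2) + int (m-2) * int (C 3) - int (m-3) * int (C 4)
     - int K11 * int (D 1 1) + int K12a * int (D 1 2) + int K12b * int (D 1 2) - int K22 * int (D 2 2)"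
proof -
  have HU: "{x\<in>U. {} \<subseteq> S x} = U" by auto
  have F1: "F (S x) = 1" if x: "x \<in> U" for x
  proof (rule F_one)
    show "finite (S x)" by (rule S_fin)
    show "S x \<noteq> {}" by (rule S_ne[OF x])
    show False if "i \<in> S x" "j \<in> S x" "k \<in> S x" "i+2 \<le> j" "j+2 \<le> k" for i j k
      by (rule S_tf[OF x that])
  qed
  have "(\<Sum>x\<in>U. F (S x)) = (\<Sum>x\<in>U. (1::int))" by (rule sum.cong) (auto simp: F1)
  then have "int (card U) = (\<Sum>x\<in>U. F (S x))" by simp
  also have "\<dots> = (\<Sum>x\<in>U. int (card (S x))) - (\<Sum>x\<in>U. int (cnt2 (S x))) + (\<Sum>x\<in>U. int (cnt3 (S x)))
     - (\<Sum>x\<in>U. int (cnt4 (S x))) - (\<Sum>x\<in>U. int (p11 (S x)))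
     + (\<Sum>x\<in>U. int (\<Sum>i\<in>S x. card (flt (\<lambda>j. i+2 \<le> j \<and> j+1 \<in> S x) (S x))))
     + (\<Sum>x\<in>U. int (\<Sum>i\<in>S x. card (flt (\<lambda>j. i+3 \<le> j \<and> i+1 \<in> S x) (S x))))
     - (\<Sum>x\<in>U. int (p22 (S x)))"
    unfolding F_def p12_def by (simp only: sum.distrib sum_subtractf of_nat_add)
  also have "(\<Sum>x\<in>U. int (card (S x))) = int m * int (C 1)"
  proof (rule termU[where J="{1..m}" and T="\<lambda>j. {j}"])
    show "card (S x) = card {p\<in>{1..m}. {p} \<subseteq> S x}" for x
      by (rule arg_cong[where f=card]) (auto simp: S_mem)
    show "h ({p}) = C 1" if "p \<in> {1..m}" for p using that by (intro h1[of _ p]) auto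
  qed auto
  also have "(\<Sum>x\<in>U. int (cnt2 (S x))) = int (m-1) * int (C 2)"
  proof (rule termU[where J="{1..m-1}" and T="\<lambda>j. {j,j+1}"])
    show "cnt2 (S x) = card {p\<in>{1..m-1}. {p,p+1} \<subseteq> S x}" for x
      unfolding cnt2_def by (rule arg_cong[where f=card]) (auto simp: S_mem flt_def)
    show "h ({p,p+1}) = C 2" if "p \<in> {1..m-1}" for p using that by (intro h2[of _ p]) auto
  qed auto
  also have "(\<Sum>x\<in>U. int (cnt3 (S x))) = int (m-2) * int (C 3)"
  proof (rule termU[where J="{1..m-2}" and T="\<lambda>j. {j,j+1,j+2}"])
    show "cnt3 (S x) = card {p\<in>{1..m-2}. {p,p+1,p+2} \<subseteq> S x}" for x
      unfolding cnt3_def by (rule arg_cong[where f=card]) (auto simp: S_mem flt_def)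
    show "h ({p,p+1,p+2}) = C 3" if "p \<in> {1..m-2}" for p using that by (intro h3[of _ p]) auto
  qed auto
  also have "(\<Sum>x\<in>U. int (cnt4 (S x))) = int (m-3) * int (C 4)"
  proof (rule termU[where J="{1..m-3}" and T="\<lambda>j. {j,j+1,j+2,j+3}"])
    show "cnt4 (S x) = card {p\<in>{1..m-3}. {p,p+1,p+2,p+3} \<subseteq> S x}" for x
      unfolding cnt4_def by (rule arg_cong[where f=card]) (auto simp: S_mem flt_def)
    show "h ({p,p+1,p+2,p+3}) = C 4" if "p \<in> {1..m-3}" for p using that by (intro h4[of _ p]) auto
  qed auto
  also have "(\<Sum>x\<in>U. int (p11 (S x))) = int K11 * int (D 1 1)"
  proof (rule termU[where J="{(i,j). 1 \<le> i \<and> i+2 \<le> j \<and> j \<le> m}" and T="\<lambda>p. {fst p, snd p}"])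
    show "p11 (S x) = card {p\<in>{(i,j). 1 \<le> i \<and> i+2 \<le> j \<and> j \<le> m}. {fst p, snd p} \<subseteq> S x}" for x
    proof -
      have "p11 (S x) = card (Sigma (S x) (\<lambda>i. flt (\<lambda>j. i+2 \<le> j) (S x)))"
        unfolding p11_def by (rule card_SigmaI[symmetric]) (auto simp: S_fin)
      also have "Sigma (S x) (\<lambda>i. flt (\<lambda>j. i+2 \<le> j) (S x)) = {p\<in>{(i,j). 1 \<le> i \<and> i+2 \<le> j \<and> j \<le> m}. {fst p, snd p} \<subseteq> S x}"
        by (auto simp: S_mem flt_def)
      finally show ?thesis .
    qed
    show "h ({fst p, snd p}) = D 1 1" if "p \<in> {(i,j). 1 \<le> i \<and> i+2 \<le> j \<and> j \<le> m}" for p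
      using that by (intro h11[of _ "fst p" "snd p"]) auto
  qed (use pc_fin[of 2 m] in \<open>auto simp: K11_def\<close>)
  also have "(\<Sum>x\<in>U. int (\<Sum>i\<in>S x. card (flt (\<lambda>j. i+2 \<le> j \<and> j+1 \<in> S x) (S x)))) = int K12a * int (D 1 2)"
  proof (rule termU[where J="{(i,j). 1 \<le> i \<and> i+2 \<le> j \<and> j \<le> m-1}" and T="\<lambda>p. {fst p, snd p, snd p + 1}"])
    show "(\<Sum>i\<in>S x. card (flt (\<lambda>j. i+2 \<le> j \<and> j+1 \<in> S x) (S x))) = card {p\<in>{(i,j). 1 \<le> i \<and> i+2 \<le> j \<and> j \<le> m-1}. {fst p, snd p, snd p + 1} \<subseteq> S x}" for x
    proof -
      have "(\<Sum>i\<in>S x. card (flt (\<lambda>j. i+2 \<le> j \<and> j+1 \<in> S x) (S x))) = card (Sigma (S x) (\<lambda>i. flt (\<lambda>j. i+2 \<le> j \<and> j+1 \<in> S x) (S x)))"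
        by (rule card_SigmaI[symmetric]) (auto simp: S_fin)
      also have "Sigma (S x) (\<lambda>i. flt (\<lambda>j. i+2 \<le> j \<and> j+1 \<in> S x) (S x)) = {p\<in>{(i,j). 1 \<le> i \<and> i+2 \<le> j \<and> j \<le> m-1}. {fst p, snd p, snd p + 1} \<subseteq> S x}"
        by (auto simp: S_mem flt_def)
      finally show ?thesis .
    qed
    show "h ({fst p, snd p, snd p + 1}) = D 1 2" if "p \<in> {(i,j). 1 \<le> i \<and> i+2 \<le> j \<and> j \<le> m-1}" for p
      using that by (intro h12[of _ "fst p" "snd p"]) auto
  qed (use pc_fin[of 2 "m-1"] in \<open>auto simp: K12a_def\<close>)
  also have "(\<Sum>x\<in>U. int (\<Sum>i\<in>S x. card (flt (\<lambda>j. i+3 \<le> j \<and> i+1 \<in> S x) (S x)))) = int K12b * int (D 1 2)"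
  proof (rule termU[where J="{(i,j). 1 \<le> i \<and> i+3 \<le> j \<and> j \<le> m}" and T="\<lambda>p. {fst p, fst p + 1, snd p}"])
    show "(\<Sum>i\<in>S x. card (flt (\<lambda>j. i+3 \<le> j \<and> i+1 \<in> S x) (S x))) = card {p\<in>{(i,j). 1 \<le> i \<and> i+3 \<le> j \<and> j \<le> m}. {fst p, fst p + 1, snd p} \<subseteq> S x}" for x
    proof -
      have "(\<Sum>i\<in>S x. card (flt (\<lambda>j. i+3 \<le> j \<and> i+1 \<in> S x) (S x))) = card (Sigma (S x) (\<lambda>i. flt (\<lambda>j. i+3 \<le> j \<and> i+1 \<in> S x) (S x)))"
        by (rule card_SigmaI[symmetric]) (auto simp: S_fin)
      also have "Sigma (S x) (\<lambda>i. flt (\<lambda>j. i+3 \<le> j \<and> i+1 \<in> S x) (S x)) = {p\<in>{(i,j). 1 \<le> i \<and> i+3 \<le> j \<and> j \<le> m}. {fst p, fst p + 1, snd p} \<subseteq> S x}"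
        by (auto simp: S_mem flt_def)
      finally show ?thesis .
    qed
    show "h ({fst p, fst p + 1, snd p}) = D 1 2" if "p \<in> {(i,j). 1 \<le> i \<and> i+3 \<le> j \<and> j \<le> m}" for p
      using that by (intro h21[of _ "fst p" "snd p"]) auto
  qed (use pc_fin[of 3 m] in \<open>auto simp: K12b_def\<close>)
  also have "(\<Sum>x\<in>U. int (p22 (S x))) = int K22 * int (D 2 2)"
  proof (rule termU[where J="{(i,j). 1 \<le> i \<and> i+3 \<le> j \<and> j \<le> m-1}" and T="\<lambda>p. {fst p, fst p + 1, snd p, snd p + 1}"])
    show "p22 (S x) = card {p\<in>{(i,j). 1 \<le> i \<and> i+3 \<le> j \<and> j \<le> m-1}. {fst p, fst p + 1, snd p, snd p + 1} \<subseteq> S x}" for x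
    proof -
      have "p22 (S x) = card (Sigma (S x) (\<lambda>i. flt (\<lambda>j. i+3 \<le> j \<and> i+1\<in>S x \<and> j+1\<in>S x) (S x)))"
        unfolding p22_def by (rule card_SigmaI[symmetric]) (auto simp: S_fin)
      also have "Sigma (S x) (\<lambda>i. flt (\<lambda>j. i+3 \<le> j \<and> i+1\<in>S x \<and> j+1\<in>S x) (S x)) = {p\<in>{(i,j). 1 \<le> i \<and> i+3 \<le> j \<and> j \<le> m-1}. {fst p, fst p + 1, snd p, snd p + 1} \<subseteq> S x}"
        by (auto simp: S_mem flt_def)
      finally show ?thesis .
    qed
    show "h ({fst p, fst p + 1, snd p, snd p + 1}) = D 2 2" if "p \<in> {(i,j). 1 \<le> i \<and> i+3 \<le> j \<and> j \<le> m-1}" for p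
      using that by (intro h22[of _ "fst p" "snd p"]) auto
  qed (use pc_fin[of 3 "m-1"] in \<open>auto simp: K22_def\<close>)
  finally show ?thesis .
qed

end


lemma cancel2: "2 * int X = 2 * int Y \<Longrightarrow> X = Y" by simp

theorem lemma4p26:
  fixes U :: "'a set" and A :: "nat \<Rightarrow> 'a set" and m :: nat
  assumes "is_set_system U A m"
    and "complete_system U A m"
    and "harmonic U A m"
    and "card U < m * (m - 2)"
    and "m \<ge> 51"
    and "\<forall>I. I \<subseteq> {1..m} \<and> card I = 3 \<and> nonconsecutive I \<longrightarrow> HI U A I = {}"
  shows "\<exists>a b c d :: nat. card U = a * m + b * (m + 1) + c * (m choose 2)
           + d * ((m + 1) * (m - 2) div 2)"
proof -
  interpret hs U A m
    using assms by unfold_locales (auto simp: is_set_system_def complete_system_def)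
  define M where "M = int m"
  have M51: "M \<ge> 51" using assms(5) by (simp add: M_def)
  define K11 where "K11 = card {(i,j). 1 \<le> i \<and> i+2 \<le> j \<and> j \<le> m}"
  define K12a where "K12a = card {(i,j). 1 \<le> i \<and> i+2 \<le> j \<and> j \<le> m-1}"
  define K12b where "K12b = card {(i,j). 1 \<le> i \<and> i+3 \<le> j \<and> j \<le> m}"
  define K22 where "K22 = card {(i,j). 1 \<le> i \<and> i+3 \<le> j \<and> j \<le> m-1}"
  have nf: "int (card U) = int m * int (C 1) - int (m-1) * int (C 2) + int (m-2) * int (C 3) - int (m-3) * int (C 4)
     - int K11 * int (D 1 1) + int K12a * int (D 1 2) + int K12b * int (D 1 2) - int K22 * int (D 2 2)"
    unfolding K11_def K12a_def K12b_def K22_def by (rule n_formula)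
  have im: "int (m-1) = M-1" "int (m-2) = M-2" "int (m-3) = M-3" "int (m-4) = M-4" "int (m-5) = M-5" "int (m-6) = M-6"
    using assms(5) by (simp_all add: M_def of_nat_diff)
  have k11: "2 * int K11 = (M-2)*(M-1)"
  proof -
    have e: "2 * K11 = (m-2)*(m-1)"
    proof -
      have e0: "2 * K11 = (m-2)*(m-2+1)" unfolding K11_def by (rule pc)
      have e2: "m-2+1 = m-1" using assms(5) by simp
      show ?thesis using e0 unfolding e2 .
    qed
    have "2 * int K11 = int (m-2) * int (m-1)" using arg_cong[OF e, of int] by simp
    then show ?thesis using im by simp
  qed
  have k12a: "2 * int K12a = (M-3)*(M-2)"
  proof -
    have e: "2 * K12a = (m-3)*(m-2)"
    proof -
      have e0: "2 * K12a = ((m-1)-2)*((m-1)-2+1)" unfolding K12a_def by (rule pc)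
      have e1: "(m-1)-2 = m-3" using assms(5) by simp
      have e2: "m-3+1 = m-2" using assms(5) by simp
      show ?thesis using e0 unfolding e1 e2 .
    qed
    have "2 * int K12a = int (m-3) * int (m-2)" using arg_cong[OF e, of int] by simp
    then show ?thesis using im by simp
  qed
  have k12b: "2 * int K12b = (M-3)*(M-2)"
  proof -
    have e: "2 * K12b = (m-3)*(m-2)"
    proof -
      have e0: "2 * K12b = (m-3)*(m-3+1)" unfolding K12b_def by (rule pc)
      have e2: "m-3+1 = m-2" using assms(5) by simp
      show ?thesis using e0 unfolding e2 .
    qed
    have "2 * int K12b = int (m-3) * int (m-2)" using arg_cong[OF e, of int] by simp
    then show ?thesis using im by simp
  qed
  have k22: "2 * int K22 = (M-4)*(M-3)"
  proof -
    have e: "2 * K22 = (m-4)*(m-3)"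
    proof -
      have e0: "2 * K22 = ((m-1)-3)*((m-1)-3+1)" unfolding K22_def by (rule pc)
      have e1: "(m-1)-3 = m-4" using assms(5) by simp
      have e2: "m-4+1 = m-3" using assms(5) by simp
      show ?thesis using e0 unfolding e1 e2 .
    qed
    have "2 * int K22 = int (m-4) * int (m-3)" using arg_cong[OF e, of int] by simp
    then show ?thesis using im by simp
  qed
  have t1: "2 * (int K11 * int (D 1 1)) = (M-2)*(M-1) * int (D 1 1)" using k11 by (metis mult.assoc)
  have t2: "2 * (int K12a * int (D 1 2)) = (M-3)*(M-2) * int (D 1 2)" using k12a by (metis mult.assoc)
  have t3: "2 * (int K12b * int (D 1 2)) = (M-3)*(M-2) * int (D 1 2)" using k12b by (metis mult.assoc)
  have t4: "2 * (int K22 * int (D 2 2)) = (M-4)*(M-3) * int (D 2 2)" using k22 by (metis mult.assoc)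
  have nF: "2 * int (card U) = 2*M*int (C 1) - 2*(M-1)*int (C 2) + 2*(M-2)*int (C 3) - 2*(M-3)*int (C 4)
      - (M-2)*(M-1)*int (D 1 1) + 2*(M-3)*(M-2)*int (D 1 2) - (M-4)*(M-3)*int (D 2 2)"
  proof -
    have "2 * int (card U) = 2*M*int (C 1) - 2*(M-1)*int (C 2) + 2*(M-2)*int (C 3) - 2*(M-3)*int (C 4)
      - 2 * (int K11 * int (D 1 1)) + 2 * (int K12a * int (D 1 2)) + 2 * (int K12b * int (D 1 2)) - 2 * (int K22 * int (D 2 2))"
      using nf im by (simp add: M_def algebra_simps)
    then show ?thesis unfolding t1 t2 t3 t4 by (simp add: algebra_simps)
  qed
  have P1: "int (C 1) - 2*int (C 2) + 3*int (C 3) - 4*int (C 4) - (M-3)*int (D 1 1) + (3*M-13)*int (D 1 2) - (2*M-12)*int (D 2 2) \<ge> 0"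
    using p1_nn im by (simp add: algebra_simps)
  have P2: "int (C 2) - 2*int (C 3) + 3*int (C 4) - (M-4)*int (D 1 2) + (M-6)*int (D 2 2) \<ge> 0"
    using p2_nn im by (simp add: algebra_simps)
  have G1: "int (C 1) - int (C 2) + int (C 3) - int (C 4) - (M-2)*int (D 1 1) + (2*M-6)*int (D 1 2) - (M-4)*int (D 2 2) \<ge> 0"
    using g1_nn im by (simp add: algebra_simps)
  have lt: "int (card U) < M*(M-2)"
  proof -
    have "int (card U) < int (m * (m-2))" using assms(4) by linarith
    then show ?thesis using assms(5) by (simp add: M_def of_nat_diff)
  qed
  obtain a b c d where abcd: "a \<ge> 0" "b \<ge> 0" "c \<ge> 0" "d \<ge> 0"
    "2 * int (card U) = 2*a*M + 2*b*(M+1) + c*(M*(M-1)) + d*((M+1)*(M-2))"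
    using arith_final[OF M51 nF P1 P2 G1 q11_nn q12_nn _ lt] by auto
  have ch: "2 * int (m choose 2) = M*(M-1)"
  proof -
    have "even (m * (m-1))" by (cases "even m") auto
    then have "2 * (m choose 2) = m*(m-1)" by (simp add: choose_two)
    then have "int (2 * (m choose 2)) = int (m*(m-1))" by simp
    then show ?thesis using assms(5) by (simp add: M_def of_nat_diff)
  qed
  have dd: "2 * int ((m + 1) * (m - 2) div 2) = (M+1)*(M-2)"
  proof -
    have "even ((m+1)*(m-2))" using assms(5) by (cases "even m") auto
    then have e: "2 * ((m + 1) * (m - 2) div 2) = (m+1)*(m-2)" by simp
    have "int (2 * ((m + 1) * (m - 2) div 2)) = int (m+1) * int (m-2)" unfolding e by (rule of_nat_mult)
    then have "2 * int ((m + 1) * (m - 2) div 2) = int (m+1) * int (m-2)" by (simp only: of_nat_mult of_nat_numeral)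
    then show ?thesis using im by (simp add: M_def)
  qed
  have "2 * int (card U) = 2 * int (nat a * m + nat b * (m + 1) + nat c * (m choose 2) + nat d * ((m + 1) * (m - 2) div 2))"
  proof -
    have "2 * int (nat a * m + nat b * (m + 1) + nat c * (m choose 2) + nat d * ((m + 1) * (m - 2) div 2))
        = 2*a*M + 2*b*(M+1) + c * (2 * int (m choose 2)) + d * (2 * int ((m + 1) * (m - 2) div 2))"
      using abcd(1-4) by (simp add: M_def algebra_simps)
    also have "\<dots> = 2 * int (card U)" unfolding ch dd using abcd(5) by simp
    finally show ?thesis by simp
  qed
  then have "card U = nat a * m + nat b * (m + 1) + nat c * (m choose 2) + nat d * ((m + 1) * (m - 2) div 2)"
    by (rule cancel2)
  then show ?thesis by blast
qed

end
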